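(* If $T\in\mathcal{T}_3$ has $n\ge 4$ vertices and $t$ twigs then $\mu(T)<\frac{3n}{4}-\frac{2t}{5}$.
   Context: A leaf is a vertex of degree at most 1; an internal vertex has degree at least 2. $\mathcal{T}_3$ is the set of finite trees with at least one internal vertex in which every internal vertex has degree at least 3. A vertex $v$ is a twig if $d(v)\ge 2$ and at least $d(v)-1$ of its neighbours are leaves. A subtree is a nonempty vertex set inducing a connected subgraph; $\mu(T)$ is the average number of vertices over all subtrees of $T$. *)

theory Defs
  imports Complex_Main
begin

definition simple_graph :: "'a set \<Rightarrow> ('a \<Rightarrow> 'a \<Rightarrow> bool) \<Rightarrow> bool" where
  "simple_graph V E \<longleftrightarrow> finite V \<and> (\<forall>u v. E u v \<longrightarrow> E v u) \<and> (\<forall>v. \<not> E v v)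
     \<and> (\<forall>u v. E u v \<longrightarrow> u \<in> V \<and> v \<in> V)"

definition induced_connected :: "('a \<Rightarrow> 'a \<Rightarrow> bool) \<Rightarrow> 'a set \<Rightarrow> bool" where
  "induced_connected E S \<longleftrightarrow>
     (\<forall>u\<in>S. \<forall>v\<in>S. (\<lambda>x y. x \<in> S \<and> y \<in> S \<and> E x y)\<^sup>*\<^sup>* u v)"

definition is_cycle :: "'a set \<Rightarrow> ('a \<Rightarrow> 'a \<Rightarrow> bool) \<Rightarrow> 'a list \<Rightarrow> bool" where
  "is_cycle V E cs \<longleftrightarrow> length cs \<ge> 3 \<and> distinct cs \<and> set cs \<subseteq> V
     \<and> (\<forall>i. Suc i < length cs \<longrightarrow> E (cs ! i) (cs ! Suc i))
     \<and> E (last cs) (hd cs)"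

definition is_tree :: "'a set \<Rightarrow> ('a \<Rightarrow> 'a \<Rightarrow> bool) \<Rightarrow> bool" where
  "is_tree V E \<longleftrightarrow> simple_graph V E \<and> V \<noteq> {} \<and> induced_connected E V
     \<and> (\<nexists>cs. is_cycle V E cs)"

definition degree :: "'a set \<Rightarrow> ('a \<Rightarrow> 'a \<Rightarrow> bool) \<Rightarrow> 'a \<Rightarrow> nat" where
  "degree V E v = card {u \<in> V. E v u}"

definition is_leaf :: "'a set \<Rightarrow> ('a \<Rightarrow> 'a \<Rightarrow> bool) \<Rightarrow> 'a \<Rightarrow> bool" where
  "is_leaf V E v \<longleftrightarrow> degree V E v \<le> 1"

definition is_internal :: "'a set \<Rightarrow> ('a \<Rightarrow> 'a \<Rightarrow> bool) \<Rightarrow> 'a \<Rightarrow> bool" where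
  "is_internal V E v \<longleftrightarrow> degree V E v \<ge> 2"

definition in_T3 :: "'a set \<Rightarrow> ('a \<Rightarrow> 'a \<Rightarrow> bool) \<Rightarrow> bool" where
  "in_T3 V E \<longleftrightarrow> is_tree V E \<and> (\<exists>v\<in>V. is_internal V E v)
     \<and> (\<forall>v\<in>V. is_internal V E v \<longrightarrow> degree V E v \<ge> 3)"

definition is_twig :: "'a set \<Rightarrow> ('a \<Rightarrow> 'a \<Rightarrow> bool) \<Rightarrow> 'a \<Rightarrow> bool" where
  "is_twig V E v \<longleftrightarrow> degree V E v \<ge> 2
     \<and> card {u \<in> V. E v u \<and> is_leaf V E u} \<ge> degree V E v - 1"

definition twigs :: "'a set \<Rightarrow> ('a \<Rightarrow> 'a \<Rightarrow> bool) \<Rightarrow> 'a set" where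
  "twigs V E = {v \<in> V. is_twig V E v}"

definition subtrees :: "'a set \<Rightarrow> ('a \<Rightarrow> 'a \<Rightarrow> bool) \<Rightarrow> 'a set set" where
  "subtrees V E = {S. S \<subseteq> V \<and> S \<noteq> {} \<and> induced_connected E S}"

definition mean_subtree_order :: "'a set \<Rightarrow> ('a \<Rightarrow> 'a \<Rightarrow> bool) \<Rightarrow> real" where
  "mean_subtree_order V E =
     (\<Sum>S\<in>subtrees V E. real (card S)) / real (card (subtrees V E))"

end

theory Submission
  imports Defs
begin


lemma ic_remove:
  assumes ic: "induced_connected E S" and sym: "\<forall>u v. E u v \<longrightarrow> E v u"
  and cond: "\<forall>a\<in>S-B. \<forall>b\<in>S\<inter>B. E a b \<longrightarrow> a = c"
  shows "induced_connected E (S - B)"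
proof -
  let ?R = "\<lambda>x y. x\<in>S \<and> y\<in>S \<and> E x y"
  let ?R' = "\<lambda>x y. x\<in>S-B \<and> y\<in>S-B \<and> E x y"
  have main: "(z \<notin> B \<longrightarrow> ?R'\<^sup>*\<^sup>* x z) \<and> (z \<in> B \<longrightarrow> ?R'\<^sup>*\<^sup>* x c)"
    if x: "x \<in> S - B" and r: "?R\<^sup>*\<^sup>* x z" for x z
    using r
  proof induction
    case base then show ?case using x by auto
  next
    case (step y z)
    have yS: "y \<in> S" and zS: "z \<in> S" and e: "E y z" using step.hyps by auto
    show ?case
    proof (cases "y \<in> B")
      case True
      then have IH: "?R'\<^sup>*\<^sup>* x c" using step.IH by auto
      show ?thesis
      proof (cases "z \<in> B")
        case True then show ?thesis using IH by auto
      next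
        case False
        have "z = c" using cond zS False yS \<open>y \<in> B\<close> sym e by blast
        then show ?thesis using IH False by auto
      qed
    next
      case False
      then have IH: "?R'\<^sup>*\<^sup>* x y" using step.IH by auto
      show ?thesis
      proof (cases "z \<in> B")
        case True
        have "y = c" using cond zS False yS True e by blast
        then show ?thesis using IH True by auto
      next
        case zB: False
        have "?R' y z" using False zB yS zS e by auto
        then show ?thesis using IH zB by (simp add: rtranclp.rtrancl_into_rtrancl)
      qed
    qed
  qed
  show ?thesis unfolding induced_connected_def
  proof (intro ballI)
    fix u v assume u: "u \<in> S - B" and v: "v \<in> S - B"
    then have "?R\<^sup>*\<^sup>* u v" using ic unfolding induced_connected_def by auto
    then show "?R'\<^sup>*\<^sup>* u v" using main[OF u] v by auto
  qed
qed

lemma ic_insert: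
  assumes ic: "induced_connected E S" and u: "u \<in> S" and e1: "E u l" and e2: "E l u"
  shows "induced_connected E (insert l S)"
proof -
  let ?R = "\<lambda>x y. x\<in>S \<and> y\<in>S \<and> E x y"
  let ?R' = "\<lambda>x y. x\<in>insert l S \<and> y\<in>insert l S \<and> E x y"
  have mono: "?R'\<^sup>*\<^sup>* x y" if "?R\<^sup>*\<^sup>* x y" for x y
    using that by (rule rtranclp_mono[THEN predicate2D, rotated]) auto
  have toS: "?R'\<^sup>*\<^sup>* x u" if "x \<in> insert l S" for x
  proof (cases "x = l")
    case True then show ?thesis using u e2 by (auto intro: r_into_rtranclp)
  next
    case False then have "x \<in> S" using that by auto
    then show ?thesis using mono ic u unfolding induced_connected_def by auto
  qed
  have fromS: "?R'\<^sup>*\<^sup>* u x" if "x \<in> insert l S" for x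
  proof (cases "x = l")
    case True then show ?thesis using u e1 by (auto intro: r_into_rtranclp)
  next
    case False then have "x \<in> S" using that by auto
    then show ?thesis using mono ic u unfolding induced_connected_def by auto
  qed
  show ?thesis unfolding induced_connected_def
    using toS fromS by (meson rtranclp_trans)
qed

lemma ic_single: "induced_connected E {x}"
  unfolding induced_connected_def by auto

lemma ic_closed:
  assumes ic: "induced_connected E V" and x: "x \<in> C" "x \<in> V"
  and cl: "\<forall>z\<in>C. \<forall>y\<in>V. E z y \<longrightarrow> y \<in> C" and y: "y \<in> V"
  shows "y \<in> C"
proof -
  let ?R = "\<lambda>x y. x\<in>V \<and> y\<in>V \<and> E x y"
  have "?R\<^sup>*\<^sup>* x y" using ic x y unfolding induced_connected_def by auto
  then show ?thesis
    by induction (use x cl in auto)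
qed

lemma ic_step:
  assumes ic: "induced_connected E S" and l: "l \<in> S" and y: "y \<in> S" "y \<noteq> l"
  shows "\<exists>z\<in>S. E l z"
proof -
  let ?R = "\<lambda>x y. x\<in>S \<and> y\<in>S \<and> E x y"
  have "?R\<^sup>*\<^sup>* l y" using ic l y unfolding induced_connected_def by auto
  then show ?thesis using y(2)
    by (cases rule: converse_rtranclpE) auto
qed



definition gpath :: "'a set \<Rightarrow> ('a \<Rightarrow> 'a \<Rightarrow> bool) \<Rightarrow> 'a list \<Rightarrow> bool" where
  "gpath V E p \<longleftrightarrow> p \<noteq> [] \<and> distinct p \<and> set p \<subseteq> V
     \<and> (\<forall>i. Suc i < length p \<longrightarrow> E (p ! i) (p ! Suc i))"

lemma low_degree_vertex:
  assumes sg: "simple_graph V E" and ne: "V \<noteq> {}" and ac: "\<nexists>cs. is_cycle V E cs"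
  shows "\<exists>x\<in>V. degree V E x \<le> 1"
proof -
  have fin: "finite V" using sg unfolding simple_graph_def by auto
  have irr: "\<And>v. \<not> E v v" using sg unfolding simple_graph_def by auto
  let ?P = "{p. gpath V E p}"
  have sub: "?P \<subseteq> {xs. set xs \<subseteq> V \<and> length xs \<le> card V}"
  proof
    fix q assume "q \<in> ?P"
    then have d: "distinct q" and s: "set q \<subseteq> V" unfolding gpath_def by auto
    have "length q = card (set q)" using distinct_card[OF d] by simp
    also have "\<dots> \<le> card V" using card_mono[OF fin s] .
    finally show "q \<in> {xs. set xs \<subseteq> V \<and> length xs \<le> card V}" using s by simp
  qed
  have finP: "finite ?P"
    using finite_subset[OF sub finite_lists_length_le[OF fin]] .
  obtain x0 where "x0 \<in> V" using ne by auto
  then have "[x0] \<in> ?P" unfolding gpath_def by auto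
  then have neP: "?P \<noteq> {}" by auto
  have bnd: "\<forall>y. y \<in> ?P \<longrightarrow> length y < Suc (card V)" using sub by auto
  obtain p where pP: "p \<in> ?P" and pmax: "\<forall>q\<in>?P. length q \<le> length p"
    using ex_has_greatest_nat[where P="\<lambda>q. q \<in> ?P" and k="[x0]" and f=length, OF \<open>[x0] \<in> ?P\<close> bnd]
    by auto
  have gp: "gpath V E p" using pP by auto
  then have pne: "p \<noteq> []" and dp: "distinct p" and sp: "set p \<subseteq> V"
    and ep: "\<And>i. Suc i < length p \<Longrightarrow> E (p ! i) (p ! Suc i)"
    unfolding gpath_def by auto
  define x where "x = last p"
  define n where "n = length p"
  have n1: "n \<ge> 1" using pne n_def by (cases p) auto
  have xp: "x = p ! (n - 1)" using pne unfolding x_def n_def by (simp add: last_conv_nth)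
  have xV: "x \<in> V" using sp pne unfolding x_def by auto
  have nbsub: "{u\<in>V. E x u} \<subseteq> {p ! (n - 2)}"
  proof
    fix y assume y: "y \<in> {u\<in>V. E x u}"
    then have yV: "y \<in> V" and exy: "E x y" by auto
    show "y \<in> {p ! (n - 2)}"
    proof (cases "y \<in> set p")
      case False
      have "gpath V E (p @ [y])"
        unfolding gpath_def
      proof (intro conjI allI impI)
        show "p @ [y] \<noteq> []" by simp
        show "distinct (p @ [y])" using dp False by simp
        show "set (p @ [y]) \<subseteq> V" using sp yV by simp
        fix i assume i: "Suc i < length (p @ [y])"
        show "E ((p @ [y]) ! i) ((p @ [y]) ! Suc i)"
        proof (cases "Suc i < length p")
          case True then show ?thesis using ep[OF True] by (simp add: nth_append)
        next
          case False
          then have "i = n - 1" "Suc i = n" using i n_def by auto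
          then show ?thesis using exy xp n_def by (simp add: nth_append)
        qed
      qed
      then have "length (p @ [y]) \<le> length p" using pmax by auto
      then show ?thesis by simp
    next
      case True
      then obtain i where i: "i < n" and yi: "y = p ! i" using n_def by (auto simp: in_set_conv_nth)
      have "i \<noteq> n - 1" using irr exy xp yi by auto
      moreover have "\<not> i < n - 2"
      proof
        assume ilt: "i < n - 2"
        define cs where "cs = drop i p"
        have lcs: "length cs = n - i" using cs_def n_def by simp
        have "is_cycle V E cs"
          unfolding is_cycle_def
        proof (intro conjI allI impI)
          show "3 \<le> length cs" using lcs ilt by simp
          show "distinct cs" using dp cs_def by simp
          show "set cs \<subseteq> V" using sp cs_def by (meson set_drop_subset subset_trans)
          fix j assume "Suc j < length cs"
          then have "Suc (i + j) < length p" using lcs n_def by simp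
          then show "E (cs ! j) (cs ! Suc j)" using ep cs_def by (simp add: nth_drop)
        next
          have "last cs = x" using cs_def x_def ilt n_def by simp
          moreover have "hd cs = y" using cs_def yi i n_def by (simp add: hd_drop_conv_nth)
          ultimately show "E (last cs) (hd cs)" using exy by simp
        qed
        then show False using ac by auto
      qed
      ultimately have "i = n - 2" using i by auto
      then show ?thesis using yi by simp
    qed
  qed
  have "degree V E x \<le> 1" unfolding degree_def
    using card_mono[OF _ nbsub] by simp
  then show ?thesis using xV by auto
qed

lemma degree_sum_bound:
  assumes "simple_graph V E" and "V \<noteq> {}" and "\<nexists>cs. is_cycle V E cs"
  shows "(\<Sum>v\<in>V. degree V E v) + 2 \<le> 2 * card V"
  using assms
proof (induction "card V" arbitrary: V E rule: less_induct)
  case less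
  have sg: "simple_graph V E" by fact
  have fin: "finite V" and sym: "\<And>u v. E u v \<Longrightarrow> E v u" and irr: "\<And>v. \<not> E v v"
    and inV: "\<And>u v. E u v \<Longrightarrow> u \<in> V \<and> v \<in> V"
    using sg unfolding simple_graph_def by auto
  obtain x where xV: "x \<in> V" and dx: "degree V E x \<le> 1"
    using low_degree_vertex[OF less.prems] by auto
  define V' where "V' = V - {x}"
  define E' where "E' = (\<lambda>a b. E a b \<and> a \<noteq> x \<and> b \<noteq> x)"
  show ?case
  proof (cases "V' = {}")
    case True
    then have "V = {x}" using xV V'_def by auto
    then have "degree V E x = 0" unfolding degree_def using irr by auto
    then show ?thesis using \<open>V = {x}\<close> by simp
  next
    case False
    have sg': "simple_graph V' E'" using sg unfolding simple_graph_def V'_def E'_def by auto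
    have ac': "\<nexists>cs. is_cycle V' E' cs"
    proof
      assume "\<exists>cs. is_cycle V' E' cs"
      then obtain cs where "is_cycle V' E' cs" by auto
      then have "is_cycle V E cs" unfolding is_cycle_def V'_def E'_def by auto
      then show False using less.prems(3) by auto
    qed
    have c0: "card V > 0" using xV fin card_gt_0_iff by blast
    have lt: "card V' < card V" unfolding V'_def using xV fin c0 by (simp add: card_Diff_singleton)
    have IH: "(\<Sum>v\<in>V'. degree V' E' v) + 2 \<le> 2 * card V'"
      using less.hyps[OF lt sg' False ac'] .
    have dv: "degree V E v = degree V' E' v + (if E v x then 1 else 0)" if v: "v \<in> V'" for v
    proof -
      have eq: "{u\<in>V. E v u} = {u\<in>V'. E' v u} \<union> (if E v x then {x} else {})"
        using v xV unfolding V'_def E'_def by auto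
      have "finite {u\<in>V'. E' v u}" using fin V'_def by auto
      moreover have "x \<notin> {u\<in>V'. E' v u}" using V'_def by auto
      ultimately show ?thesis unfolding degree_def eq by auto
    qed
    have "(\<Sum>v\<in>V'. degree V E v) = (\<Sum>v\<in>V'. degree V' E' v) + (\<Sum>v\<in>V'. if E v x then 1 else 0)"
      using dv by (simp add: sum.distrib)
    also have "(\<Sum>v\<in>V'. (if E v x then 1 else 0::nat)) = card {v\<in>V'. E v x}"
    proof -
      have "finite V'" using fin V'_def by simp
      then show ?thesis using sum.inter_filter[of V' "\<lambda>_. 1::nat" "\<lambda>v. E v x"] by simp
    qed
    also have "{v\<in>V'. E v x} = {u\<in>V. E x u}" using sym irr V'_def by auto
    also have "card {u\<in>V. E x u} = degree V E x" by (simp add: degree_def)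
    finally have s1: "(\<Sum>v\<in>V'. degree V E v) = (\<Sum>v\<in>V'. degree V' E' v) + degree V E x" .
    have "(\<Sum>v\<in>V. degree V E v) = degree V E x + (\<Sum>v\<in>V'. degree V E v)"
      using xV fin V'_def by (simp add: sum.remove)
    moreover have "card V = card V' + 1" using xV fin V'_def c0 by (simp add: card_Diff_singleton)
    ultimately show ?thesis using s1 IH dx by simp
  qed
qed



locale t3 =
  fixes V :: "'a set" and E :: "'a \<Rightarrow> 'a \<Rightarrow> bool"
  assumes T3: "in_T3 V E"
begin

lemma sg: "simple_graph V E" using T3 unfolding in_T3_def is_tree_def by auto
lemma fin: "finite V" using sg unfolding simple_graph_def by auto
lemma sym: "E u v \<Longrightarrow> E v u" using sg unfolding simple_graph_def by auto
lemma irr: "\<not> E v v" using sg unfolding simple_graph_def by auto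
lemma inV: "E u v \<Longrightarrow> u \<in> V" "E u v \<Longrightarrow> v \<in> V" using sg unfolding simple_graph_def by auto
lemma conn: "induced_connected E V" using T3 unfolding in_T3_def is_tree_def by auto
lemma acyc: "\<nexists>cs. is_cycle V E cs" using T3 unfolding in_T3_def is_tree_def by auto
lemma Vne: "V \<noteq> {}" using T3 unfolding in_T3_def is_tree_def by auto
lemma ex_int: "\<exists>v\<in>V. is_internal V E v" using T3 unfolding in_T3_def by auto
lemma int3: "v \<in> V \<Longrightarrow> is_internal V E v \<Longrightarrow> degree V E v \<ge> 3" using T3 unfolding in_T3_def by auto

definition "I = {v\<in>V. is_internal V E v}"
definition "L = {v\<in>V. is_leaf V E v}"
definition "Lf u = {v\<in>V. E u v \<and> is_leaf V E v}"

lemma IL_disj: "I \<inter> L = {}" unfolding I_def L_def is_internal_def is_leaf_def by auto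
lemma IL_un: "V = I \<union> L" unfolding I_def L_def is_internal_def is_leaf_def by auto
lemma notI_L: "v \<in> V \<Longrightarrow> v \<notin> I \<Longrightarrow> v \<in> L" unfolding I_def L_def is_internal_def is_leaf_def by auto
lemma IV: "v \<in> I \<Longrightarrow> v \<in> V" and LV: "v \<in> L \<Longrightarrow> v \<in> V" unfolding I_def L_def by auto
lemma finI: "finite I" and finL: "finite L" using fin unfolding I_def L_def by auto

lemma card1_sing: assumes "finite A" "card A \<le> 1" "z \<in> A" shows "A = {z}"
proof -
  have "\<forall>a1\<in>A. \<forall>a2\<in>A. a1 = a2" using card_le_Suc0_iff_eq[OF assms(1)] assms(2) by simp
  then show ?thesis using assms(3) by blast
qed

lemma leaf_nbr:
  assumes l: "l \<in> L"
  shows "\<exists>u. {x\<in>V. E l x} = {u} \<and> u \<in> I"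
proof -
  have lV: "l \<in> V" and dl: "card {x\<in>V. E l x} \<le> 1" using l unfolding L_def is_leaf_def degree_def by auto
  obtain u0 where u0: "u0 \<in> V" "is_internal V E u0" using ex_int by auto
  have "u0 \<noteq> l" using u0 l unfolding L_def is_leaf_def is_internal_def by auto
  then obtain z where zV: "z \<in> V" and ez: "E l z" using ic_step[OF conn lV u0(1)] by auto
  have finN: "finite {x\<in>V. E l x}" using fin by auto
  have N1: "{x\<in>V. E l x} = {z}"
  proof -
    have "z \<in> {x\<in>V. E l x}" using zV ez by auto
    then show ?thesis using card1_sing[OF finN dl] by simp
  qed
  have "z \<in> I"
  proof (rule ccontr)
    assume "z \<notin> I"
    then have zL: "z \<in> L" using zV notI_L by blast
    then have dz: "card {x\<in>V. E z x} \<le> 1" unfolding L_def is_leaf_def degree_def by auto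
    have "l \<in> {x\<in>V. E z x}" using lV sym[OF ez] by blast
    moreover have "finite {x\<in>V. E z x}" using fin by auto
    ultimately have N2: "{x\<in>V. E z x} = {l}" using dz card1_sing by metis
    have cl: "\<forall>c\<in>{l,z}. \<forall>y\<in>V. E c y \<longrightarrow> y \<in> {l,z}" using N1 N2 by auto
    have "u0 \<in> {l, z}" using ic_closed[OF conn _ lV cl u0(1)] by auto
    then show False using u0 l zL unfolding L_def is_leaf_def is_internal_def by auto
  qed
  then show ?thesis using N1 by auto
qed

definition "nbr l = (THE u. u \<in> V \<and> E l u)"

lemma nbr: assumes "l \<in> L" shows "{x\<in>V. E l x} = {nbr l}" "nbr l \<in> I" "E l (nbr l)" "E (nbr l) l"
proof -
  obtain u where u: "{x\<in>V. E l x} = {u}" "u \<in> I" using leaf_nbr[OF assms] by auto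
  have "nbr l = u" unfolding nbr_def
    by (rule the_equality) (use u in auto)
  then show "{x\<in>V. E l x} = {nbr l}" "nbr l \<in> I" using u by auto
  then show "E l (nbr l)" by auto
  then show "E (nbr l) l" using sym by blast
qed

lemma nbr_unique: "l \<in> L \<Longrightarrow> x \<in> V \<Longrightarrow> E l x \<Longrightarrow> x = nbr l"
  using nbr(1) by blast

lemma leaf_deg: "l \<in> L \<Longrightarrow> degree V E l = 1"
  unfolding degree_def using nbr(1) by simp

abbreviation "ST \<equiv> subtrees V E"
definition "Nv v = card {S\<in>ST. v \<in> S}"

lemma finST: "finite ST"
proof -
  have "ST \<subseteq> Pow V" unfolding subtrees_def by auto
  then show ?thesis using fin finite_subset by auto
qed

lemma single_ST: "v \<in> V \<Longrightarrow> {v} \<in> ST"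
  unfolding subtrees_def using ic_single by auto

end



context t3 begin

lemma leaf_identity:
  assumes l: "l \<in> L"
  shows "2 * Nv l = 2 + Nv (nbr l)"
proof -
  define u where "u = nbr l"
  have lV: "l \<in> V" using l LV by auto
  have uI: "u \<in> I" and elu: "E l u" and eul: "E u l" using nbr[OF l] u_def by auto
  have uV: "u \<in> V" using uI IV by auto
  have ul: "u \<noteq> l" using elu irr by auto
  define A where "A = {S\<in>ST. u \<in> S \<and> l \<in> S}"
  define B where "B = {S\<in>ST. u \<in> S \<and> l \<notin> S}"
  have finA: "finite A" and finB: "finite B" using finST unfolding A_def B_def by auto
  have e1: "{S\<in>ST. l \<in> S} = insert {l} A"
  proof
    show "{S\<in>ST. l \<in> S} \<subseteq> insert {l} A"
    proof
      fix S assume S: "S \<in> {S\<in>ST. l \<in> S}"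
      then have SST: "S \<in> ST" and lS: "l \<in> S" by auto
      show "S \<in> insert {l} A"
      proof (cases "S = {l}")
        case True then show ?thesis by simp
      next
        case False
        then obtain y where y: "y \<in> S" "y \<noteq> l" using lS by auto
        have ic: "induced_connected E S" and SV: "S \<subseteq> V" using SST unfolding subtrees_def by auto
        obtain z where z: "z \<in> S" "E l z" using ic_step[OF ic lS y] by auto
        have "z = u" using nbr_unique[OF l] z SV u_def by auto
        then show ?thesis using z SST lS unfolding A_def by auto
      qed
    qed
    show "insert {l} A \<subseteq> {S\<in>ST. l \<in> S}" using single_ST[OF lV] unfolding A_def by auto
  qed
  have nA: "{l} \<notin> A" using ul unfolding A_def by auto
  have e2: "{S\<in>ST. u \<in> S} = A \<union> B" unfolding A_def B_def by auto
  have dj: "A \<inter> B = {}" unfolding A_def B_def by auto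
  have bij: "bij_betw (\<lambda>S. S - {l}) A B"
  proof (rule bij_betw_byWitness[where f'="insert l"])
    show "\<forall>a\<in>A. insert l (a - {l}) = a" unfolding A_def by auto
    show "\<forall>a\<in>B. insert l a - {l} = a" unfolding B_def by auto
    show "(\<lambda>S. S - {l}) ` A \<subseteq> B"
    proof
      fix T assume "T \<in> (\<lambda>S. S - {l}) ` A"
      then obtain S where S: "S \<in> A" and T: "T = S - {l}" by auto
      have SST: "S \<in> ST" and uS: "u \<in> S" using S unfolding A_def by auto
      have ic: "induced_connected E S" and SV: "S \<subseteq> V" using SST unfolding subtrees_def by auto
      have cond: "\<forall>a\<in>S-{l}. \<forall>b\<in>S\<inter>{l}. E a b \<longrightarrow> a = u"
      proof (intro ballI impI)
        fix a b assume a: "a \<in> S - {l}" and b: "b \<in> S \<inter> {l}" and e: "E a b"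
        have "E l a" using sym e b by auto
        then show "a = u" using nbr_unique[OF l] a SV u_def by auto
      qed
      have "induced_connected E (S - {l})" using ic_remove[OF ic _ cond] sym by blast
      then show "T \<in> B" using T uS ul SV unfolding B_def subtrees_def by auto
    qed
    show "insert l ` B \<subseteq> A"
    proof
      fix T assume "T \<in> insert l ` B"
      then obtain S where S: "S \<in> B" and T: "T = insert l S" by auto
      have SST: "S \<in> ST" and uS: "u \<in> S" using S unfolding B_def by auto
      have ic: "induced_connected E S" and SV: "S \<subseteq> V" using SST unfolding subtrees_def by auto
      have "induced_connected E (insert l S)" using ic_insert[OF ic uS eul elu] .
      then show "T \<in> A" using T uS lV SV unfolding A_def subtrees_def by auto
    qed
  qed
  have cAB: "card A = card B" using bij_betw_same_card[OF bij] .
  have "Nv l = card A + 1" unfolding Nv_def e1 using nA finA by simp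
  moreover have "Nv u = card A + card B" unfolding Nv_def e2 using card_Un_disjoint[OF finA finB dj] .
  ultimately show ?thesis using cAB u_def by simp
qed

end


context t3 begin

lemma Lf_L: "x \<in> Lf u \<Longrightarrow> x \<in> L" unfolding Lf_def L_def by auto

lemma twig_counts:
  assumes uI: "u \<in> I" and tw: "is_twig V E u"
  shows "\<exists>a::nat. card {S\<in>ST. u \<in> S} \<le> 2 ^ card (Lf u) * (a + 1)
            \<and> card (Lf u) + a \<le> card {S\<in>ST. u \<notin> S}
            \<and> card (Lf u) \<le> degree V E u \<and> degree V E u \<le> card (Lf u) + 1
            \<and> (card (Lf u) = degree V E u \<longrightarrow> a = 0)"
proof -
  define k where "k = card (Lf u)"
  define d where "d = degree V E u"
  define nb where "nb = {x\<in>V. E u x}"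
  define NL where "NL = nb - Lf u"
  define Bs where "Bs = insert u (Lf u)"
  define AA where "AA = {S\<in>ST. S \<inter> Bs = {}}"
  have uV: "u \<in> V" using uI IV by auto
  have d3: "d \<ge> 3" using int3[OF uV] uI unfolding I_def d_def by auto
  have finnb: "finite nb" using fin nb_def by auto
  have Lfnb: "Lf u \<subseteq> nb" unfolding Lf_def nb_def by auto
  have dnb: "d = card nb" unfolding d_def nb_def degree_def by simp
  have kd: "k \<le> d" using card_mono[OF finnb Lfnb] k_def dnb by simp
  have twk: "k \<ge> d - 1" using tw unfolding is_twig_def k_def d_def Lf_def by auto
  have cNL: "card NL = d - k" unfolding NL_def dnb k_def using card_Diff_subset[OF finite_subset[OF Lfnb finnb] Lfnb] by simp
  have finNL: "finite NL" using finnb NL_def by auto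
  have NL1: "card NL \<le> 1" using cNL twk by simp
  obtain c where c: "\<forall>x\<in>NL. x = c"
  proof (cases "NL = {}")
    case True then show ?thesis using that by auto
  next
    case False then obtain c where "c \<in> NL" by auto
    then have "NL = {c}" using card1_sing[OF finNL NL1] by simp
    then show ?thesis using that by auto
  qed
  have finAA: "finite AA" using finST AA_def by auto
  have finC: "finite {S\<in>ST. u \<in> S}" and finD: "finite {S\<in>ST. u \<notin> S}" using finST by auto
  have leafnb: "x = u" if "y \<in> Lf u" "x \<in> V" "E y x" for x y
  proof -
    have yL: "y \<in> L" using Lf_L that(1) by auto
    have "E u y" using that(1) unfolding Lf_def by auto
    then have "E y u" using sym by blast
    then have "u = nbr y" using nbr_unique[OF yL] uV by auto
    moreover have "x = nbr y" using nbr_unique[OF yL] that by auto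
    ultimately show ?thesis by simp
  qed
  have T1: "card {S\<in>ST. u \<in> S} \<le> 2 ^ k * (card AA + 1)"
  proof -
    define f where "f = (\<lambda>S. (S \<inter> Lf u, S - Bs))"
    have inj: "inj_on f {S\<in>ST. u \<in> S}"
    proof (rule inj_onI)
      fix S S' assume S: "S \<in> {S\<in>ST. u \<in> S}" and S': "S' \<in> {S\<in>ST. u \<in> S}" and eq: "f S = f S'"
      have "S = insert u ((S \<inter> Lf u) \<union> (S - Bs))" using S Bs_def by auto
      moreover have "S' = insert u ((S' \<inter> Lf u) \<union> (S' - Bs))" using S' Bs_def by auto
      ultimately show "S = S'" using eq unfolding f_def by (metis prod.inject)
    qed
    have img: "f ` {S\<in>ST. u \<in> S} \<subseteq> Pow (Lf u) \<times> insert {} AA"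
    proof
      fix p assume "p \<in> f ` {S\<in>ST. u \<in> S}"
      then obtain S where S: "S \<in> ST" "u \<in> S" and p: "p = f S" by auto
      have ic: "induced_connected E S" and SV: "S \<subseteq> V" using S unfolding subtrees_def by auto
      have cond: "\<forall>a\<in>S-Bs. \<forall>b\<in>S\<inter>Bs. E a b \<longrightarrow> a = c"
      proof (intro ballI impI)
        fix a b assume a: "a \<in> S - Bs" and b: "b \<in> S \<inter> Bs" and e: "E a b"
        have aV: "a \<in> V" using a SV by auto
        have eba: "E b a" using sym e by blast
        show "a = c"
        proof (cases "b = u")
          case True
          then have "a \<in> NL" using eba aV a unfolding NL_def nb_def Bs_def by auto
          then show ?thesis using c by auto
        next
          case False
          then have "b \<in> Lf u" using b Bs_def by auto
          then have "a = u" using leafnb aV eba by auto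
          then show ?thesis using a Bs_def by auto
        qed
      qed
      have "S - Bs \<in> insert {} AA"
      proof (cases "S - Bs = {}")
        case True then show ?thesis by simp
      next
        case False
        have "induced_connected E (S - Bs)" using ic_remove[OF ic _ cond] sym by blast
        then show ?thesis using False SV unfolding AA_def subtrees_def by auto
      qed
      then show "p \<in> Pow (Lf u) \<times> insert {} AA" using p f_def by auto
    qed
    have "{} \<notin> AA" unfolding AA_def subtrees_def by auto
    then have cardP: "card (Pow (Lf u) \<times> insert {} AA) = 2 ^ k * (card AA + 1)"
      using finAA fin k_def by (simp add: card_cartesian_product card_Pow Lf_def)
    have "card {S\<in>ST. u \<in> S} = card (f ` {S\<in>ST. u \<in> S})" using card_image[OF inj] by simp
    also have "\<dots> \<le> card (Pow (Lf u) \<times> insert {} AA)"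
      by (rule card_mono) (use finAA fin img in \<open>auto simp: Lf_def\<close>)
    finally show ?thesis using cardP by simp
  qed
  have T2: "k + card AA \<le> card {S\<in>ST. u \<notin> S}"
  proof -
    have sub: "(\<lambda>x. {x}) ` Lf u \<union> AA \<subseteq> {S\<in>ST. u \<notin> S}"
    proof -
      have "(\<lambda>x. {x}) ` Lf u \<subseteq> {S\<in>ST. u \<notin> S}"
        using single_ST irr unfolding Lf_def by auto
      moreover have "AA \<subseteq> {S\<in>ST. u \<notin> S}" unfolding AA_def Bs_def by auto
      ultimately show ?thesis by auto
    qed
    have dj: "(\<lambda>x. {x}) ` Lf u \<inter> AA = {}" unfolding AA_def Bs_def by auto
    have finLf: "finite (Lf u)" using fin Lf_def by auto
    have "card ((\<lambda>x. {x}) ` Lf u \<union> AA) = k + card AA"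
      using card_Un_disjoint[OF finite_imageI[OF finLf] finAA dj] card_image[of "\<lambda>x. {x}" "Lf u"] k_def
      by (simp add: inj_on_def)
    then show ?thesis using card_mono[OF finD sub] by simp
  qed
  have T4: "k = d \<longrightarrow> card AA = 0"
  proof
    assume "k = d"
    then have NLe: "NL = {}" using cNL finNL by auto
    have cl: "\<forall>z\<in>Bs. \<forall>y\<in>V. E z y \<longrightarrow> y \<in> Bs"
    proof (intro ballI impI)
      fix z y assume z: "z \<in> Bs" and y: "y \<in> V" and e: "E z y"
      show "y \<in> Bs"
      proof (cases "z = u")
        case True
        then have "y \<in> nb" using y e nb_def by auto
        then show ?thesis using NLe NL_def Bs_def by auto
      next
        case False
        then have "z \<in> Lf u" using z Bs_def by auto
        then show ?thesis using leafnb y e Bs_def by auto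
      qed
    qed
    have VB: "V \<subseteq> Bs" using ic_closed[OF conn _ uV cl] Bs_def by auto
    have "AA = {}" unfolding AA_def subtrees_def using VB by auto
    then show "card AA = 0" by simp
  qed
  show ?thesis using T1 T2 T4 kd twk d3 k_def d_def by (intro exI[of _ "card AA"]) auto
qed

end


lemma arith_twig:
  fixes X Y a k d :: nat
  assumes h1: "X \<le> 2^k*(a+1)" and h2: "k + a \<le> Y" and h3: "k \<le> d" and h4: "d \<le> k+1"
    and h5: "3 \<le> d" and h6: "k = d \<longrightarrow> a = 0"
  shows "real X * (1 + real k/2) \<le> (1 + real k/2 + (real d - 3)/4 - 2/5) * (real X + real Y)"
proof (cases "d \<ge> 5")
  case True
  have c: "0 \<le> ((real d - 3)/4 - 2/5) * (real X + real Y)" using True by (intro mult_nonneg_nonneg) auto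
  have "real X * (1 + real k/2) \<le> (real X + real Y) * (1 + real k/2)"
    by (intro mult_right_mono) auto
  also have "\<dots> \<le> (real X + real Y) * (1 + real k/2) + ((real d - 3)/4 - 2/5) * (real X + real Y)"
    using c by simp
  also have "\<dots> = (1 + real k/2 + (real d - 3)/4 - 2/5) * (real X + real Y)"
    by (simp only: distrib_left distrib_right mult.commute add.assoc diff_conv_add_uminus)
  finally show ?thesis .
next
  case False
  then have "(d = 3 \<and> k = 2) \<or> (d = 3 \<and> k = 3) \<or> (d = 4 \<and> k = 3) \<or> (d = 4 \<and> k = 4)" using h3 h4 h5 by auto
  then show ?thesis
  proof (elim disjE conjE)
    assume "d = 3" "k = 2"
    have n1: "X \<le> 4 * (a + 1)" "2 + a \<le> Y" using h1 h2 \<open>k=2\<close> by simp_all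
    have "real X \<le> real (4 * (a + 1))" "real (2 + a) \<le> real Y" using n1 by (simp only: of_nat_le_iff)+
    then have "real X \<le> 4 * (real a + 1)" "real a + 2 \<le> real Y" by simp_all
    then show ?thesis using \<open>d = 3\<close> \<open>k = 2\<close> by (simp add: algebra_simps)
  next
    assume "d = 3" "k = 3"
    then have "a = 0" using h6 by simp
    have n1: "X \<le> 8 * (a + 1)" "3 + a \<le> Y" using h1 h2 \<open>k=3\<close> by simp_all
    have "real X \<le> real (8 * (a + 1))" "real (3 + a) \<le> real Y" using n1 by (simp only: of_nat_le_iff)+
    then have "real X \<le> 8 * (real a + 1)" "real a + 3 \<le> real Y" by simp_all
    then show ?thesis using \<open>d = 3\<close> \<open>k = 3\<close> \<open>a = 0\<close> by (simp add: algebra_simps)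
  next
    assume "d = 4" "k = 3"
    have n1: "X \<le> 8 * (a + 1)" "3 + a \<le> Y" using h1 h2 \<open>k=3\<close> by simp_all
    have "real X \<le> real (8 * (a + 1))" "real (3 + a) \<le> real Y" using n1 by (simp only: of_nat_le_iff)+
    then have "real X \<le> 8 * (real a + 1)" "real a + 3 \<le> real Y" by simp_all
    then show ?thesis using \<open>d = 4\<close> \<open>k = 3\<close> by (simp add: algebra_simps)
  next
    assume "d = 4" "k = 4"
    then have "a = 0" using h6 by simp
    have n1: "X \<le> 16 * (a + 1)" "4 + a \<le> Y" using h1 h2 \<open>k=4\<close> by simp_all
    have "real X \<le> real (16 * (a + 1))" "real (4 + a) \<le> real Y" using n1 by (simp only: of_nat_le_iff)+
    then have "real X \<le> 16 * (real a + 1)" "real a + 4 \<le> real Y" by simp_all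
    then show ?thesis using \<open>d = 4\<close> \<open>k = 4\<close> \<open>a = 0\<close> by (simp add: algebra_simps)
  qed
qed

context t3 begin

lemma split_N: "card ST = Nv u + card {S\<in>ST. u \<notin> S}"
proof -
  have "ST = {S\<in>ST. u \<in> S} \<union> {S\<in>ST. u \<notin> S}" by auto
  then have "card ST = card ({S\<in>ST. u \<in> S} \<union> {S\<in>ST. u \<notin> S})" by simp
  also have "\<dots> = Nv u + card {S\<in>ST. u \<notin> S}" unfolding Nv_def
    by (rule card_Un_disjoint) (use finST in auto)
  finally show ?thesis .
qed

definition "bud u = 1 + real (card (Lf u))/2 + (real (degree V E u) - 3)/4 - (if is_twig V E u then 2/5 else 0)"

lemma vertex_bound:
  assumes uI: "u \<in> I"
  shows "real (Nv u) * (1 + real (card (Lf u))/2) \<le> bud u * real (card ST)"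
proof (cases "is_twig V E u")
  case True
  obtain a where a: "card {S\<in>ST. u \<in> S} \<le> 2 ^ card (Lf u) * (a + 1)"
            "card (Lf u) + a \<le> card {S\<in>ST. u \<notin> S}"
            "card (Lf u) \<le> degree V E u" "degree V E u \<le> card (Lf u) + 1"
            "card (Lf u) = degree V E u \<longrightarrow> a = 0"
    using twig_counts[OF uI True] by blast
  have d3: "3 \<le> degree V E u" using int3 uI unfolding I_def by auto
  have "real (Nv u) * (1 + real (card (Lf u))/2) \<le> (1 + real (card (Lf u))/2 + (real (degree V E u) - 3)/4 - 2/5) * (real (Nv u) + real (card {S\<in>ST. u \<notin> S}))"
    using arith_twig[OF a(1)[folded Nv_def] a(2) a(3) a(4) d3 a(5)] .
  then show ?thesis unfolding bud_def using True split_N[of u] by simp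
next
  case False
  have d3: "3 \<le> degree V E u" using int3 uI unfolding I_def by auto
  have "card (Lf u) + 2 \<le> degree V E u" using False d3 unfolding is_twig_def Lf_def by auto
  have le: "real (Nv u) \<le> real (card ST)" using split_N[of u] by simp
  have "0 \<le> 1 + real (card (Lf u))/2" by simp
  then have "real (Nv u) * (1 + real (card (Lf u))/2) \<le> real (card ST) * (1 + real (card (Lf u))/2)"
    using le by (simp add: mult_right_mono)
  also have "\<dots> \<le> real (card ST) * (1 + real (card (Lf u))/2 + (real (degree V E u) - 3)/4)"
    using d3 by (intro mult_left_mono) auto
  finally show ?thesis unfolding bud_def using False by (simp add: mult.commute)
qed

end


context t3 begin

lemma tot_eq: "(\<Sum>S\<in>ST. card S) = (\<Sum>v\<in>V. Nv v)"
proof -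
  have "(\<Sum>S\<in>ST. card S) = (\<Sum>S\<in>ST. \<Sum>v\<in>V. if v \<in> S then 1 else 0)"
  proof (rule sum.cong[OF refl])
    fix S assume "S \<in> ST"
    then have SV: "S \<subseteq> V" unfolding subtrees_def by auto
    have "(\<Sum>v\<in>V. if v \<in> S then 1 else (0::nat)) = card {v\<in>V. v \<in> S}"
      using sum.inter_filter[OF fin, of "\<lambda>_. 1::nat" "\<lambda>v. v \<in> S"] by simp
    also have "{v\<in>V. v \<in> S} = S" using SV by auto
    finally show "card S = (\<Sum>v\<in>V. if v \<in> S then 1 else 0)" by simp
  qed
  also have "\<dots> = (\<Sum>v\<in>V. \<Sum>S\<in>ST. if v \<in> S then 1 else 0)" by (rule sum.swap)
  also have "\<dots> = (\<Sum>v\<in>V. Nv v)"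
  proof (rule sum.cong[OF refl])
    fix v
    show "(\<Sum>S\<in>ST. if v \<in> S then 1 else (0::nat)) = Nv v"
      using sum.inter_filter[OF finST, of "\<lambda>_. 1::nat" "\<lambda>S. v \<in> S"] unfolding Nv_def by simp
  qed
  finally show ?thesis .
qed

lemma regroup:
  fixes g :: "'a \<Rightarrow> real"
  shows "(\<Sum>l\<in>L. g (nbr l)) = (\<Sum>u\<in>I. real (card (Lf u)) * g u)"
proof -
  have "(\<Sum>l\<in>L. g (nbr l)) = (\<Sum>l\<in>L. \<Sum>u\<in>I. if E u l then g u else 0)"
  proof (rule sum.cong[OF refl])
    fix l assume l: "l \<in> L"
    have "{u\<in>I. E u l} = {nbr l}"
    proof
      show "{u\<in>I. E u l} \<subseteq> {nbr l}"
      proof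
        fix u assume u: "u \<in> {u\<in>I. E u l}"
        then have "E l u" using sym by blast
        moreover have "u \<in> V" using u IV by auto
        ultimately show "u \<in> {nbr l}" using nbr_unique[OF l] by auto
      qed
      show "{nbr l} \<subseteq> {u\<in>I. E u l}" using nbr[OF l] by auto
    qed
    then show "g (nbr l) = (\<Sum>u\<in>I. if E u l then g u else 0)"
      using sum.inter_filter[OF finI, of g "\<lambda>u. E u l"] by simp
  qed
  also have "\<dots> = (\<Sum>u\<in>I. \<Sum>l\<in>L. if E u l then g u else 0)" by (rule sum.swap)
  also have "\<dots> = (\<Sum>u\<in>I. real (card (Lf u)) * g u)"
  proof (rule sum.cong[OF refl])
    fix u
    have "{l\<in>L. E u l} = Lf u" unfolding L_def Lf_def by auto
    then show "(\<Sum>l\<in>L. if E u l then g u else 0) = real (card (Lf u)) * g u"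
      using sum.inter_filter[OF finL, of "\<lambda>_. g u" "\<lambda>l. E u l"] by simp
  qed
  finally show ?thesis .
qed

lemma sum_Lf: "(\<Sum>u\<in>I. real (card (Lf u))) = real (card L)"
  using regroup[of "\<lambda>_. 1"] by simp

lemma sum_VIL: "(\<Sum>v\<in>V. f v) = (\<Sum>v\<in>I. f v) + (\<Sum>v\<in>L. f v)"
proof -
  have "(\<Sum>v\<in>V. f v) = (\<Sum>v\<in>I \<union> L. f v)" by (rule arg_cong[OF IL_un])
  also have "\<dots> = (\<Sum>v\<in>I. f v) + (\<Sum>v\<in>L. f v)" by (rule sum.union_disjoint[OF finI finL IL_disj])
  finally show ?thesis .
qed

lemma card_VIL: "card V = card I + card L"
  using sum_VIL[of "\<lambda>_. 1::nat"] by simp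

lemma deg_sum: "real (\<Sum>u\<in>I. degree V E u) + real (card L) + 2 \<le> 2 * real (card V)"
proof -
  have "(\<Sum>v\<in>V. degree V E v) + 2 \<le> 2 * card V" using degree_sum_bound[OF sg Vne acyc] .
  moreover have "(\<Sum>v\<in>L. degree V E v) = card L" using leaf_deg by simp
  ultimately have "(\<Sum>u\<in>I. degree V E u) + card L + 2 \<le> 2 * card V" using sum_VIL[of "degree V E"] by simp
  then have "real ((\<Sum>u\<in>I. degree V E u) + card L + 2) \<le> real (2 * card V)" by (simp only: of_nat_le_iff)
  then show ?thesis by simp
qed

lemma twigs_I: "twigs V E = {u\<in>I. is_twig V E u}"
  unfolding twigs_def I_def is_twig_def is_internal_def by auto

lemma N_big: "2 * card L < card ST"
proof -
  define F1 where "F1 = (\<lambda>v. {v}) ` V"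
  define F2 where "F2 = (\<lambda>l. {l, nbr l}) ` L"
  have s1: "F1 \<subseteq> ST" using single_ST unfolding F1_def by auto
  have s2: "F2 \<subseteq> ST"
  proof
    fix T assume "T \<in> F2"
    then obtain l where l: "l \<in> L" and T: "T = {l, nbr l}" unfolding F2_def by auto
    have "induced_connected E (insert l {nbr l})"
      using ic_insert[OF ic_single[of E "nbr l"] _ nbr(4)[OF l] nbr(3)[OF l]] by simp
    moreover have "nbr l \<in> V" using nbr(2)[OF l] IV by auto
    ultimately show "T \<in> ST" using T l LV unfolding subtrees_def by auto
  qed
  have inj1: "inj_on (\<lambda>v. {v}) V" by (auto simp: inj_on_def)
  have inj2: "inj_on (\<lambda>l. {l, nbr l}) L"
  proof (rule inj_onI)
    fix l l' assume l: "l \<in> L" and l': "l' \<in> L" and eq: "{l, nbr l} = {l', nbr l'}"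
    have "l \<noteq> nbr l'" using nbr(2)[OF l'] l IL_disj by auto
    moreover have "l \<in> {l', nbr l'}" using eq by blast
    ultimately show "l = l'" by blast
  qed
  have dj: "F1 \<inter> F2 = {}"
  proof -
    have "l \<noteq> nbr l" if "l \<in> L" for l using nbr(3)[OF that] irr by metis
    then show ?thesis unfolding F1_def F2_def by (fastforce simp: doubleton_eq_iff)
  qed
  have finF: "finite F1" "finite F2" using fin finL F1_def F2_def by auto
  have "card F1 + card F2 \<le> card ST"
    using card_Un_disjoint[OF finF dj] card_mono[OF finST, of "F1 \<union> F2"] s1 s2 by auto
  moreover have "card F1 = card V" using card_image[OF inj1] F1_def by simp
  moreover have "card F2 = card L" using card_image[OF inj2] F2_def by simp
  moreover have "card I > 0" using ex_int finI unfolding I_def by (auto simp: card_gt_0_iff)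
  ultimately show ?thesis using card_VIL by simp
qed

theorem main_loc:
  "mean_subtree_order V E < 3 * real (card V) / 4 - 2 * real (card (twigs V E)) / 5"
proof -
  define N where "N = real (card ST)"
  define k where "k = (\<lambda>u. real (card (Lf u)))"
  define d where "d = (\<lambda>u. real (degree V E u))"
  define tw where "tw = (\<lambda>u. if is_twig V E u then 2/5 else (0::real))"
  define n where "n = real (card V)"
  define lc where "lc = real (card L)"
  define m where "m = real (card I)"
  define t where "t = real (card (twigs V E))"
  have Npos: "N > 0" using N_big N_def by simp
  have "real (2 * card L) < real (card ST)" using N_big by (simp only: of_nat_less_iff)
  then have Nbig: "2 * lc < N" using N_def lc_def by simp
  have nml: "n = m + lc" using card_VIL n_def m_def lc_def by simp
  have tot: "real (\<Sum>S\<in>ST. card S) = (\<Sum>v\<in>I. real (Nv v)) + (\<Sum>v\<in>L. real (Nv v))"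
    using tot_eq sum_VIL[of "\<lambda>v. real (Nv v)"] by (simp add: of_nat_sum)
  have leafsum: "(\<Sum>v\<in>L. real (Nv v)) = lc + (\<Sum>u\<in>I. k u * real (Nv u)) / 2"
  proof -
    have "(\<Sum>v\<in>L. real (Nv v)) = (\<Sum>v\<in>L. 1 + real (Nv (nbr v)) / 2)"
    proof (rule sum.cong[OF refl])
      fix v assume "v \<in> L"
      from leaf_identity[OF this] have "real (2 * Nv v) = real (2 + Nv (nbr v))" by (simp only:)
      then have "2 * real (Nv v) = 2 + real (Nv (nbr v))" by simp
      then show "real (Nv v) = 1 + real (Nv (nbr v)) / 2" by simp
    qed
    also have "\<dots> = lc + (\<Sum>v\<in>L. real (Nv (nbr v))) / 2"
      by (simp add: sum.distrib sum_divide_distrib lc_def)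
    also have "(\<Sum>v\<in>L. real (Nv (nbr v))) = (\<Sum>u\<in>I. k u * real (Nv u))"
      using regroup[of "\<lambda>u. real (Nv u)"] k_def by simp
    finally show ?thesis .
  qed
  have T: "real (\<Sum>S\<in>ST. card S) = (\<Sum>u\<in>I. real (Nv u) * (1 + k u / 2)) + lc"
  proof -
    have "(\<Sum>u\<in>I. real (Nv u) * (1 + k u / 2)) = (\<Sum>u\<in>I. real (Nv u)) + (\<Sum>u\<in>I. k u * real (Nv u)) / 2"
      by (simp add: sum.distrib sum_divide_distrib algebra_simps)
    then show ?thesis using tot leafsum by simp
  qed
  have VB: "(\<Sum>u\<in>I. real (Nv u) * (1 + k u / 2)) \<le> (\<Sum>u\<in>I. bud u * N)"
    by (rule sum_mono) (use vertex_bound k_def N_def in auto)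
  have budsum: "(\<Sum>u\<in>I. bud u) = m + lc / 2 + ((\<Sum>u\<in>I. d u) - 3 * m) / 4 - (\<Sum>u\<in>I. tw u)"
  proof -
    have "(\<Sum>u\<in>I. bud u) = (\<Sum>u\<in>I. 1 + k u / 2 + (d u - 3) / 4 - tw u)"
      unfolding bud_def k_def d_def tw_def by simp
    also have "\<dots> = m + (\<Sum>u\<in>I. k u) / 2 + ((\<Sum>u\<in>I. d u) - 3 * m) / 4 - (\<Sum>u\<in>I. tw u)"
      by (simp add: sum.distrib sum_subtractf sum_divide_distrib[symmetric] m_def)
    also have "(\<Sum>u\<in>I. k u) = lc" using sum_Lf k_def lc_def by simp
    finally show ?thesis .
  qed
  have twsum: "(\<Sum>u\<in>I. tw u) = 2 * t / 5"
  proof -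
    have "(\<Sum>u\<in>I. tw u) = (\<Sum>u\<in>{u\<in>I. is_twig V E u}. 2/5)"
      unfolding tw_def using sum.inter_filter[OF finI, of "\<lambda>_. 2/5::real" "is_twig V E"] by simp
    then show ?thesis using twigs_I t_def by simp
  qed
  have dsum: "(\<Sum>u\<in>I. d u) + lc + 2 \<le> 2 * n"
    using deg_sum d_def lc_def n_def by (simp add: of_nat_sum)
  have B: "(\<Sum>u\<in>I. bud u) \<le> 3 * n / 4 - 1/2 - 2 * t / 5"
    using budsum twsum dsum nml by (simp add: field_simps)
  have "real (\<Sum>S\<in>ST. card S) \<le> (\<Sum>u\<in>I. bud u) * N + lc"
    using T VB by (simp add: sum_distrib_right)
  also have "\<dots> \<le> (3 * n / 4 - 1/2 - 2 * t / 5) * N + lc"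
    using B Npos by (simp add: mult_right_mono)
  also have "\<dots> < (3 * n / 4 - 2 * t / 5) * N"
    using Nbig by (simp add: algebra_simps)
  finally have "real (\<Sum>S\<in>ST. card S) / N < 3 * n / 4 - 2 * t / 5"
    using Npos by (simp add: divide_less_eq)
  then show ?thesis unfolding mean_subtree_order_def N_def n_def t_def
    by (simp add: of_nat_sum)
qed

end

theorem mainTheorem7:
  fixes V :: "'a set" and E :: "'a \<Rightarrow> 'a \<Rightarrow> bool"
  assumes "in_T3 V E" and "card V \<ge> 4"
  shows "mean_subtree_order V E
           < 3 * real (card V) / 4 - 2 * real (card (twigs V E)) / 5"
proof -
  interpret t3 V E using assms(1) by unfold_locales
  show ?thesis by (rule main_loc)
qed

end
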